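(* Let $(V_1,\dots,V_n)$ be an $n$-tuple of doubly non-commuting isometries on $H$, let $A=\{i_1,\dots,i_l\}\subseteq\{1,\dots,n\}$ be a (possibly empty) set of $l$ distinct indices, and let $k_{i_1},\dots,k_{i_l}\ge0$. Then $$\big[V_{i_1}^{k_{i_1}}(\mathbf 1-V_{i_1}V_{i_1}^* )V_{i_1}^{*k_{i_1}}\big]\cdots\big[V_{i_l}^{k_{i_l}}(\mathbf 1-V_{i_l}V_{i_l}^* )V_{i_l}^{*k_{i_l}}\big]=\big[V_{i_1}^{k_{i_1}}\cdots V_{i_l}^{k_{i_l}}\big]\big[(\mathbf 1-V_{i_1}V_{i_1}^* )\cdots(\mathbf 1-V_{i_l}V_{i_l}^* )\big]\big[V_{i_l}^{*k_{i_l}}\cdots V_{i_1}^{*k_{i_1}}\big]$$ and $$\big[V_{i_1}^{k_{i_1}}V_{i_1}^{*k_{i_1}}\big]\cdots\big[V_{i_l}^{k_{i_l}}V_{i_l}^{*k_{i_l}}\big]=\big[V_{i_1}^{k_{i_1}}\cdots V_{i_l}^{k_{i_l}}\big]\big[V_{i_l}^{*k_{i_l}}\cdots V_{i_1}^{*k_{i_1}}\big].$$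
   Context: Fix $n\ge1$ and $z_{ij}\in\mathbb T$ ($i\ne j$) with $z_{ji}=\overline{z_{ij}}$; $(V_1,\dots,V_n)$ is doubly non-commuting if the $V_i$ are isometries on $H$ with $V_i^*V_j=\overline{z_{ij}}V_jV_i^*$ for $i\ne j$. $\mathbf 1$ is the identity operator; empty products equal $\mathbf 1$. *)

theory Defs
  imports "HOL-Analysis.Analysis"
begin

text \<open>A complex Hilbert space is modelled as a real Hilbert space ('h :: {real_inner, complete_space})
  together with a complex structure J (multiplication by i): J is real-linear, J (J x) = - x and
  J is orthogonal. The complex inner product is x \<bullet> y + i (x \<bullet> J y); for J-commuting
  (i.e. complex-linear) operators the real adjoint coincides with the complex adjoint.\<close>

definition complex_structure :: "('h::real_inner \<Rightarrow> 'h) \<Rightarrow> bool" where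
  "complex_structure J \<longleftrightarrow> linear J \<and> (\<forall>x. J (J x) = - x) \<and> (\<forall>x y. J x \<bullet> J y = x \<bullet> y)"

definition cscale :: "('h::real_vector \<Rightarrow> 'h) \<Rightarrow> complex \<Rightarrow> 'h \<Rightarrow> 'h" where
  "cscale J c x = Re c *\<^sub>R x + Im c *\<^sub>R J x"

definition cbounded_op :: "('h::real_normed_vector \<Rightarrow> 'h) \<Rightarrow> ('h \<Rightarrow> 'h) \<Rightarrow> bool" where
  "cbounded_op J T \<longleftrightarrow> bounded_linear T \<and> (\<forall>x. T (J x) = J (T x))"

definition is_adjoint :: "('h::real_inner \<Rightarrow> 'h) \<Rightarrow> ('h \<Rightarrow> 'h) \<Rightarrow> bool" where
  "is_adjoint T S \<longleftrightarrow> (\<forall>x y. T x \<bullet> y = x \<bullet> S y)"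

definition isometry_op :: "('h::real_inner \<Rightarrow> 'h) \<Rightarrow> ('h \<Rightarrow> 'h) \<Rightarrow> ('h \<Rightarrow> 'h) \<Rightarrow> bool" where
  "isometry_op J T S \<longleftrightarrow> cbounded_op J T \<and> is_adjoint T S \<and> S \<circ> T = id"

definition doubly_noncommuting ::
  "('h::real_inner \<Rightarrow> 'h) \<Rightarrow> nat \<Rightarrow> (nat \<Rightarrow> nat \<Rightarrow> complex) \<Rightarrow> (nat \<Rightarrow> 'h \<Rightarrow> 'h) \<Rightarrow> (nat \<Rightarrow> 'h \<Rightarrow> 'h) \<Rightarrow> bool" where
  "doubly_noncommuting J n z V Vs \<longleftrightarrow>
     (\<forall>i\<in>{1..n}. isometry_op J (V i) (Vs i)) \<and>
     (\<forall>i\<in>{1..n}. \<forall>j\<in>{1..n}. i \<noteq> j \<longrightarrow>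
        cmod (z i j) = 1 \<and> z j i = cnj (z i j) \<and>
        Vs i \<circ> V j = cscale J (cnj (z i j)) \<circ> V j \<circ> Vs i)"

definition oprod :: "('a \<Rightarrow> 'a) list \<Rightarrow> 'a \<Rightarrow> 'a" where
  "oprod fs = foldr (\<circ>) fs id"

end

theory Submission imports Defs begin

definition good :: "('h::real_inner \<Rightarrow> 'h) \<Rightarrow> ('h \<Rightarrow> 'h) \<Rightarrow> bool" where
  "good J T \<longleftrightarrow> linear T \<and> (\<forall>x. T (J x) = J (T x))"

lemma inner_ext: fixes a b :: "'h::real_inner"
  assumes "\<And>x. x \<bullet> a = x \<bullet> b" shows "a = b"
proof -
  have "(a - b) \<bullet> (a - b) = 0" using assms[of "a-b"] by (simp add: inner_diff_right)
  thus ?thesis by simp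
qed

lemma adjoint_unique: assumes "is_adjoint T S1" "is_adjoint T S2" shows "S1 = S2"
proof
  fix y show "S1 y = S2 y"
    by (rule inner_ext) (metis assms is_adjoint_def)
qed

lemma adjoint_comp: assumes "is_adjoint T S" "is_adjoint T' S'"
  shows "is_adjoint (T \<circ> T') (S' \<circ> S)"
  using assms unfolding is_adjoint_def by simp

lemma adjoint_sym: assumes "is_adjoint T S" shows "is_adjoint S T"
  using assms unfolding is_adjoint_def by (metis inner_commute)

lemma cs_one: "cscale J 1 = id"
  by (simp add: cscale_def fun_eq_iff)

locale dnc =
  fixes J :: "'h::{real_inner,complete_space} \<Rightarrow> 'h"
    and n :: nat and z :: "nat \<Rightarrow> nat \<Rightarrow> complex"
    and V Vs :: "nat \<Rightarrow> 'h \<Rightarrow> 'h"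
  assumes cs: "complex_structure J"
    and dn: "doubly_noncommuting J n z V Vs"
begin

lemma J_lin: "linear J" using cs by (simp add: complex_structure_def)
lemma JJ[simp]: "J (J x) = - x" using cs by (simp add: complex_structure_def)
lemma J_orth: "J x \<bullet> J y = x \<bullet> y" using cs by (simp add: complex_structure_def)
lemma J_skew: "J x \<bullet> y = - (x \<bullet> J y)"
  using J_orth[of x "J y"] by (simp add: inner_minus_right)

lemma J_add: "J (x + y) = J x + J y" using J_lin by (simp add: linear_add)
lemma J_scale: "J (r *\<^sub>R x) = r *\<^sub>R J x" using J_lin by (simp add: linear_scale)
lemma J_minus: "J (- x) = - J x" using J_lin by (simp add: linear_neg)

lemma cs_mult: "cscale J a (cscale J b x) = cscale J (a * b) x"
  by (simp add: cscale_def J_add J_scale algebra_simps)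

lemma cs_mult_fun: "cscale J a \<circ> cscale J b = cscale J (a * b)"
  by (simp add: fun_eq_iff cs_mult)

lemma cs_unit: assumes "cmod c = 1" shows "cscale J (c * cnj c) x = x" "cscale J (cnj c * c) x = x"
proof -
  have "c * cnj c = 1" using assms by (metis complex_norm_square mult.commute of_real_1 power_one)
  thus "cscale J (c * cnj c) x = x" "cscale J (cnj c * c) x = x" by (simp_all add: cs_one mult.commute)
qed

lemma cs_adj: "is_adjoint (cscale J c) (cscale J (cnj c))"
  unfolding is_adjoint_def cscale_def
  by (simp add: inner_add_left inner_add_right inner_diff_right J_skew)

lemma good_cs_pt: assumes "good J T" shows "T (cscale J c x) = cscale J c (T x)"
  using assms unfolding good_def cscale_def by (simp add: linear_add linear_scale)

lemma good_cs: assumes "good J T" shows "T \<circ> cscale J c = cscale J c \<circ> T"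
  using good_cs_pt[OF assms] by (simp add: fun_eq_iff)

lemma good_id: "good J id" by (simp add: good_def linear_id)
lemma good_comp: "good J S \<Longrightarrow> good J T \<Longrightarrow> good J (S \<circ> T)"
  by (simp add: good_def linear_compose)
lemma good_pow: "good J S \<Longrightarrow> good J (S ^^ a)"
  by (induction a) (simp_all add: good_id good_comp)
lemma good_cs_op: "good J (cscale J c)"
  unfolding good_def cscale_def
  by (auto intro!: linearI simp: J_add J_scale algebra_simps)
lemma good_diff: "good J S \<Longrightarrow> good J (\<lambda>x. x - S x)"
proof -
  assume a: "good J S"
  have "linear (\<lambda>x. x - S x)" using a unfolding good_def
    by (intro linear_compose_sub linear_id[unfolded id_def]) simp
  moreover have "J (x - S x) = J x - S (J x)" for x using a unfolding good_def
    by (simp add: linear_diff[OF J_lin])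
  ultimately show ?thesis by (simp add: good_def)
qed

lemma good_oprod: "(\<And>f. f \<in> set fs \<Longrightarrow> good J f) \<Longrightarrow> good J (oprod fs)"
  by (induction fs) (simp_all add: oprod_def good_id good_comp)

end

context dnc begin

lemma iso: "i \<in> {1..n} \<Longrightarrow> isometry_op J (V i) (Vs i)"
  using dn by (simp add: doubly_noncommuting_def)

lemma V_good: "i \<in> {1..n} \<Longrightarrow> good J (V i)"
  using iso[of i] by (simp add: isometry_op_def cbounded_op_def good_def bounded_linear.linear)

lemma adj: "i \<in> {1..n} \<Longrightarrow> is_adjoint (V i) (Vs i)"
  using iso[of i] by (simp add: isometry_op_def)

lemma VsV: "i \<in> {1..n} \<Longrightarrow> Vs i (V i x) = x"
  using iso[of i] by (simp add: isometry_op_def fun_eq_iff)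

lemma Vs_good: assumes i: "i \<in> {1..n}" shows "good J (Vs i)"
proof -
  have a: "V i x \<bullet> y = x \<bullet> Vs i y" for x y using adj[OF i] by (simp add: is_adjoint_def)
  have g: "good J (V i)" using V_good[OF i] .
  have "linear (Vs i)"
  proof (rule linearI)
    fix b c show "Vs i (b + c) = Vs i b + Vs i c"
      by (rule inner_ext) (simp add: a[symmetric] inner_add_right)
  next
    fix r b show "Vs i (r *\<^sub>R b) = r *\<^sub>R Vs i b"
      by (rule inner_ext) (simp add: a[symmetric])
  qed
  moreover have "Vs i (J y) = J (Vs i y)" for y
  proof (rule inner_ext)
    fix x
    have "x \<bullet> Vs i (J y) = V i x \<bullet> J y" by (simp add: a)
    also have "\<dots> = - (J (V i x) \<bullet> y)" by (simp add: J_skew)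
    also have "\<dots> = - (V i (J x) \<bullet> y)" using g by (simp add: good_def)
    also have "\<dots> = - (J x \<bullet> Vs i y)" by (simp add: a)
    also have "\<dots> = x \<bullet> J (Vs i y)" by (simp add: J_skew)
    finally show "x \<bullet> Vs i (J y) = x \<bullet> J (Vs i y)" .
  qed
  ultimately show ?thesis by (simp add: good_def)
qed

lemma zprops: "i \<in> {1..n} \<Longrightarrow> j \<in> {1..n} \<Longrightarrow> i \<noteq> j \<Longrightarrow>
   cmod (z i j) = 1 \<and> z j i = cnj (z i j) \<and> Vs i \<circ> V j = cscale J (cnj (z i j)) \<circ> V j \<circ> Vs i"
  using dn unfolding doubly_noncommuting_def by blast

lemma R1: "i \<in> {1..n} \<Longrightarrow> j \<in> {1..n} \<Longrightarrow> i \<noteq> j \<Longrightarrow>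
   Vs i (V j x) = cscale J (cnj (z i j)) (V j (Vs i x))"
  using zprops[of i j] by (auto simp: fun_eq_iff)

lemma R2: assumes i: "i \<in> {1..n}" and j: "j \<in> {1..n}" and ij: "i \<noteq> j"
  shows "V i (V j x) = cscale J (z i j) (V j (V i x))"
proof -
  define c where "c = z i j"
  have c1: "cmod c = 1" and zji: "z j i = cnj c" using zprops[OF i j ij] by (auto simp: c_def)
  define w where "w = V i (V j x) - cscale J c (V j (V i x))"
  have ai: "V i u \<bullet> y = u \<bullet> Vs i y" for u y using adj[OF i] by (simp add: is_adjoint_def)
  have aj: "V j u \<bullet> y = u \<bullet> Vs j y" for u y using adj[OF j] by (simp add: is_adjoint_def)
  have lin_i: "linear (Vs i)" and lin_j: "linear (Vs j)" using Vs_good[OF i] Vs_good[OF j] by (simp_all add: good_def)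
  have "Vs i w = 0"
  proof -
    have "Vs i w = V j x - Vs i (cscale J c (V j (V i x)))"
      by (simp add: w_def linear_diff[OF lin_i] VsV[OF i])
    also have "Vs i (cscale J c (V j (V i x))) = cscale J c (cscale J (cnj c) (V j x))"
      by (simp add: good_cs_pt[OF Vs_good[OF i]] R1[OF i j ij] VsV[OF i] c_def)
    also have "\<dots> = V j x" by (simp add: cs_mult cs_unit[OF c1])
    finally show ?thesis by simp
  qed
  moreover have "Vs j w = 0"
  proof -
    have "Vs j w = Vs j (V i (V j x)) - cscale J c (V i x)"
      by (simp add: w_def linear_diff[OF lin_j] VsV[OF j] good_cs_pt[OF Vs_good[OF j]])
    also have "Vs j (V i (V j x)) = cscale J c (V i x)"
      by (simp add: R1[OF j i ij[symmetric]] VsV[OF j] zji)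
    finally show ?thesis by simp
  qed
  ultimately have "w \<bullet> w = 0"
    apply (subst (2) w_def)
    by (simp add: inner_diff_right inner_commute[of w] ai aj flip: good_cs_pt[OF V_good[OF j]])
  thus ?thesis by (simp add: w_def c_def)
qed

lemma R3: assumes i: "i \<in> {1..n}" and j: "j \<in> {1..n}" and ij: "i \<noteq> j"
  shows "Vs i (Vs j x) = cscale J (z i j) (Vs j (Vs i x))"
proof -
  have zji: "z j i = cnj (z i j)" using zprops[OF i j ij] by auto
  have e: "V j \<circ> V i = cscale J (z j i) \<circ> V i \<circ> V j"
    using R2[OF j i ij[symmetric]] by (simp add: fun_eq_iff)
  have a1: "is_adjoint (V j \<circ> V i) (Vs i \<circ> Vs j)" by (rule adjoint_comp[OF adj[OF j] adj[OF i]])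
  have a2: "is_adjoint (cscale J (z j i) \<circ> V i \<circ> V j) ((Vs j \<circ> Vs i) \<circ> cscale J (cnj (z j i)))"
    using adjoint_comp[OF adjoint_comp[OF cs_adj adj[OF i]] adj[OF j]] by (simp add: comp_assoc)
  have "Vs i \<circ> Vs j = (Vs j \<circ> Vs i) \<circ> cscale J (cnj (z j i))"
    using adjoint_unique[OF a1 a2[folded e]] .
  hence "Vs i (Vs j x) = Vs j (Vs i (cscale J (cnj (z j i)) x))" by (simp add: fun_eq_iff)
  thus ?thesis by (simp add: zji good_cs_pt[OF Vs_good[OF i]] good_cs_pt[OF Vs_good[OF j]])
qed

end


context dnc begin

lemma pw1: assumes h: "\<And>x. S (T x) = cscale J c (T (S x))" and gS: "good J S" and gT: "good J T"
  shows "(S^^a) (T x) = cscale J (c^a) (T ((S^^a) x))"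
proof (induction a arbitrary: x)
  case 0 then show ?case by (simp add: cs_one)
next
  case (Suc a)
  have "(S^^Suc a) (T x) = S (cscale J (c^a) (T ((S^^a) x)))" using Suc by simp
  also have "\<dots> = cscale J (c^a) (cscale J c (T (S ((S^^a) x))))" by (simp add: good_cs_pt[OF gS] h)
  finally show ?case by (simp add: cs_mult mult.commute)
qed

lemma pw2: assumes h: "\<And>x. S (T x) = cscale J c (T (S x))" and gS: "good J S" and gT: "good J T"
  shows "S ((T^^b) x) = cscale J (c^b) ((T^^b) (S x))"
proof (induction b arbitrary: x)
  case 0 then show ?case by (simp add: cs_one)
next
  case (Suc b)
  have "S ((T^^Suc b) x) = S (T ((T^^b) x))" by simp
  also have "\<dots> = cscale J c (T (S ((T^^b) x)))" by (simp add: h)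
  also have "\<dots> = cscale J c (T (cscale J (c^b) ((T^^b) (S x))))" using Suc by simp
  finally show ?case by (simp add: good_cs_pt[OF gT] cs_mult)
qed

lemma pw: assumes h: "\<And>x. S (T x) = cscale J c (T (S x))" and gS: "good J S" and gT: "good J T"
  shows "(S^^a) ((T^^b) x) = cscale J (c^(a*b)) ((T^^b) ((S^^a) x))"
proof -
  have h2: "\<And>x. S ((T^^b) x) = cscale J (c^b) ((T^^b) (S x))" by (rule pw2[OF h gS gT])
  show ?thesis using pw1[OF h2 gS good_pow[OF gT]] by (simp add: power_mult[symmetric] mult.commute)
qed

lemma Pa: "i \<in> {1..n} \<Longrightarrow> j \<in> {1..n} \<Longrightarrow> i \<noteq> j \<Longrightarrow>
   (V i^^a) ((V j^^b) x) = cscale J (z i j^(a*b)) ((V j^^b) ((V i^^a) x))"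
  by (rule pw[OF R2 V_good V_good])
lemma Pb: "i \<in> {1..n} \<Longrightarrow> j \<in> {1..n} \<Longrightarrow> i \<noteq> j \<Longrightarrow>
   (Vs i^^a) ((Vs j^^b) x) = cscale J (z i j^(a*b)) ((Vs j^^b) ((Vs i^^a) x))"
  by (rule pw[OF R3 Vs_good Vs_good])
lemma Pc: "i \<in> {1..n} \<Longrightarrow> j \<in> {1..n} \<Longrightarrow> i \<noteq> j \<Longrightarrow>
   (Vs i^^a) ((V j^^b) x) = cscale J (cnj (z i j)^(a*b)) ((V j^^b) ((Vs i^^a) x))"
  by (rule pw[OF R1 Vs_good V_good])

lemma cs_pow_unit: assumes "cmod c = 1" shows "cscale J (c^m) (cscale J (cnj c^m) x) = x"
proof -
  have "c * cnj c = 1" using assms by (metis complex_norm_square mult.commute of_real_1 power_one)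
  hence "c^m * cnj c^m = 1" by (metis power_mult_distrib power_one)
  thus ?thesis by (simp add: cs_mult cs_one)
qed

lemma G2: assumes i: "i \<in> {1..n}" and j: "j \<in> {1..n}" and ij: "i \<noteq> j" and gZ: "good J Z"
  shows "(V i^^a) ((V j^^b) (Z ((Vs j^^b) ((Vs i^^a) x)))) = (V j^^b) ((V i^^a) (Z ((Vs i^^a) ((Vs j^^b) x))))"
proof -
  have zz: "cmod (z i j) = 1" "z j i = cnj (z i j)" using zprops[OF i j ij] by auto
  have "(V i^^a) ((V j^^b) (Z ((Vs j^^b) ((Vs i^^a) x))))
     = cscale J (z i j^(a*b)) ((V j^^b) ((V i^^a) (Z (cscale J (cnj (z i j)^(a*b)) ((Vs i^^a) ((Vs j^^b) x))))))"
    by (simp add: Pa[OF i j ij] Pb[OF j i ij[symmetric]] zz mult.commute)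
  also have "\<dots> = (V j^^b) ((V i^^a) (Z ((Vs i^^a) ((Vs j^^b) x))))"
    by (simp add: good_cs_pt[OF gZ] good_cs_pt[OF good_pow[OF V_good[OF i]]]
        good_cs_pt[OF good_pow[OF V_good[OF j]]] cs_pow_unit[OF zz(1)])
  finally show ?thesis .
qed

lemma H1: assumes i: "i \<in> {1..n}" and j: "j \<in> {1..n}" and ij: "i \<noteq> j"
  shows "(V i^^a) ((Vs i^^a) ((V j^^b) x)) = (V j^^b) ((V i^^a) ((Vs i^^a) x))"
proof -
  have zz: "cmod (z i j) = 1" using zprops[OF i j ij] by auto
  show ?thesis
    by (simp add: Pc[OF i j ij] Pa[OF i j ij] good_cs_pt[OF good_pow[OF V_good[OF i]]] cs_mult
       mult.commute[of "cnj _ ^ _"] cs_pow_unit[OF zz, unfolded cs_mult])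
qed

lemma H2: assumes i: "i \<in> {1..n}" and j: "j \<in> {1..n}" and ij: "i \<noteq> j"
  shows "(Vs i^^a) (V j (Vs j x)) = V j (Vs j ((Vs i^^a) x))"
proof -
  have zz: "cmod (z i j) = 1" using zprops[OF i j ij] by auto
  have "(Vs i^^a) (V j (Vs j x)) = (Vs i^^a) ((V j^^1) ((Vs j^^1) x))" by simp
  also have "\<dots> = V j (Vs j ((Vs i^^a) x))"
    unfolding Pc[OF i j ij] Pb[OF i j ij]
    by (simp add: good_cs_pt[OF V_good[OF j]] cs_mult
       mult.commute[of "cnj _ ^ _"] cs_pow_unit[OF zz, unfolded cs_mult])
  finally show ?thesis .
qed

end


lemma oprod_Nil[simp]: "oprod [] = id" by (simp add: oprod_def)
lemma oprod_Cons[simp]: "oprod (f # fs) = f \<circ> oprod fs" by (simp add: oprod_def)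
lemma oprod_append[simp]: "oprod (fs @ gs) = oprod fs \<circ> oprod gs"
  by (induction fs) (simp_all add: oprod_def)

context dnc begin

lemma goodA: "set L \<subseteq> {1..n} \<Longrightarrow> good J (oprod (map (\<lambda>i. V i ^^ k i) L))"
proof (rule good_oprod)
  fix f assume "set L \<subseteq> {1..n}" "f \<in> set (map (\<lambda>i. V i ^^ k i) L)"
  then obtain i where "i \<in> {1..n}" "f = V i ^^ k i" by auto
  thus "good J f" by (simp add: good_pow V_good)
qed
lemma goodB: "set L \<subseteq> {1..n} \<Longrightarrow> good J (oprod (map (\<lambda>i. Vs i ^^ k i) (rev L)))"
proof (rule good_oprod)
  fix f assume "set L \<subseteq> {1..n}" "f \<in> set (map (\<lambda>i. Vs i ^^ k i) (rev L))"
  then obtain i where "i \<in> {1..n}" "f = Vs i ^^ k i" by auto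
  thus "good J f" by (simp add: good_pow Vs_good)
qed
lemma goodP: "set L \<subseteq> {1..n} \<Longrightarrow> good J (oprod (map (\<lambda>i. (\<lambda>x. x - V i (Vs i x))) L))"
  by (rule good_oprod) (auto intro!: good_diff good_comp[OF V_good Vs_good, unfolded comp_def])

lemma GL: assumes i: "i \<in> {1..n}" and L: "set L \<subseteq> {1..n}" "i \<notin> set L" and gZ: "good J Z"
  shows "(V i^^a) (oprod (map (\<lambda>i. V i ^^ k i) L) (Z (oprod (map (\<lambda>i. Vs i ^^ k i) (rev L)) ((Vs i^^a) x))))
    = oprod (map (\<lambda>i. V i ^^ k i) L) ((V i^^a) (Z ((Vs i^^a) (oprod (map (\<lambda>i. Vs i ^^ k i) (rev L)) x))))"
  using L
proof (induction L arbitrary: x)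
  case Nil then show ?case by simp
next
  case (Cons j L)
  have j: "j \<in> {1..n}" and ij: "i \<noteq> j" and L': "set L \<subseteq> {1..n}" "i \<notin> set L" using Cons.prems by auto
  have gZ': "good J (oprod (map (\<lambda>i. V i ^^ k i) L) \<circ> Z \<circ> oprod (map (\<lambda>i. Vs i ^^ k i) (rev L)))"
    by (intro good_comp goodA goodB gZ L')
  show ?case
    using G2[OF i j ij gZ', of a "k j" x] Cons.IH[OF L', of "(Vs j ^^ k j) x"] by simp
qed

lemma HA: assumes i: "i \<in> {1..n}" and L: "set L \<subseteq> {1..n}" "i \<notin> set L"
  shows "(V i^^a) ((Vs i^^a) (oprod (map (\<lambda>i. V i ^^ k i) L) x))
    = oprod (map (\<lambda>i. V i ^^ k i) L) ((V i^^a) ((Vs i^^a) x))"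
  using L
proof (induction L arbitrary: x)
  case Nil then show ?case by simp
next
  case (Cons j L)
  have j: "j \<in> {1..n}" and ij: "i \<noteq> j" and L': "set L \<subseteq> {1..n}" "i \<notin> set L" using Cons.prems by auto
  show ?case using H1[OF i j ij] Cons.IH[OF L'] by simp
qed

lemma HP: assumes i: "i \<in> {1..n}" and L: "set L \<subseteq> {1..n}" "i \<notin> set L"
  shows "(Vs i^^a) (oprod (map (\<lambda>i. (\<lambda>x. x - V i (Vs i x))) L) x)
    = oprod (map (\<lambda>i. (\<lambda>x. x - V i (Vs i x))) L) ((Vs i^^a) x)"
  using L
proof (induction L arbitrary: x)
  case Nil then show ?case by simp
next
  case (Cons j L)
  have j: "j \<in> {1..n}" and ij: "i \<noteq> j" and L': "set L \<subseteq> {1..n}" "i \<notin> set L" using Cons.prems by auto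
  have lin: "linear (Vs i ^^ a)" using good_pow[OF Vs_good[OF i]] by (simp add: good_def)
  show ?case using H2[OF i j ij] Cons.IH[OF L'] by (simp add: linear_diff[OF lin])
qed

lemma FA: assumes i: "i \<in> {1..n}" and L: "set L \<subseteq> {1..n}" "i \<notin> set L"
  shows "(V i^^a) ((Vs i^^a) (oprod (map (\<lambda>i. V i ^^ k i) L) x) - V i (Vs i ((Vs i^^a) (oprod (map (\<lambda>i. V i ^^ k i) L) x))))
    = oprod (map (\<lambda>i. V i ^^ k i) L) ((V i^^a) ((Vs i^^a) x - V i (Vs i ((Vs i^^a) x))))"
proof -
  have linV: "linear (V i ^^ a)" using good_pow[OF V_good[OF i]] by (simp add: good_def)
  have linA: "linear (oprod (map (\<lambda>i. V i ^^ k i) L))" using goodA[OF L(1)] by (simp add: good_def)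
  have e: "(V i^^a) (V i (Vs i ((Vs i^^a) y))) = (V i^^Suc a) ((Vs i^^Suc a) y)" for y
    by (simp add: funpow_swap1)
  show ?thesis
    by (simp add: linear_diff[OF linV] linear_diff[OF linA] e HA[OF i L] del: funpow.simps)
qed

end


context dnc begin

lemma main1: "distinct L \<Longrightarrow> set L \<subseteq> {1..n} \<Longrightarrow>
  oprod (map (\<lambda>i. (V i ^^ k i) \<circ> (\<lambda>x. x - V i (Vs i x)) \<circ> (Vs i ^^ k i)) L)
           = oprod (map (\<lambda>i. V i ^^ k i) L) \<circ> oprod (map (\<lambda>i. (\<lambda>x. x - V i (Vs i x))) L)
             \<circ> oprod (map (\<lambda>i. Vs i ^^ k i) (rev L))"
proof (induction L)
  case Nil then show ?case by simp
next
  case (Cons i L)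
  have i: "i \<in> {1..n}" and L: "set L \<subseteq> {1..n}" "i \<notin> set L" and d: "distinct L" using Cons.prems by auto
  define A where "A = oprod (map (\<lambda>i. V i ^^ k i) L)"
  define B where "B = oprod (map (\<lambda>i. Vs i ^^ k i) (rev L))"
  define Pr where "Pr = oprod (map (\<lambda>i. (\<lambda>x. x - V i (Vs i x))) L)"
  define Pi where "Pi = (\<lambda>x. x - V i (Vs i x))"
  have gZ: "good J (Pi \<circ> Pr)" unfolding Pi_def Pr_def
    by (intro good_comp goodP[OF L(1)] good_diff good_comp[OF V_good[OF i] Vs_good[OF i], unfolded comp_def])
  have IH: "oprod (map (\<lambda>i. (V i ^^ k i) \<circ> (\<lambda>x. x - V i (Vs i x)) \<circ> (Vs i ^^ k i)) L) = A \<circ> Pr \<circ> B"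
    unfolding A_def B_def Pr_def by (rule Cons.IH[OF d L(1)])
  show ?case
  proof (rule ext)
    fix x
    have "(V i^^k i) (A (Pi (Pr (B ((Vs i^^k i) x))))) = A ((V i^^k i) (Pi (Pr ((Vs i^^k i) (B x)))))"
      using GL[OF i L gZ, where a="k i" and x=x and k=k] by (simp add: A_def B_def)
    also have "\<dots> = A ((V i^^k i) (Pi ((Vs i^^k i) (Pr (B x)))))"
      using HP[OF i L, where a="k i"] by (simp add: Pr_def)
    also have "\<dots> = (V i^^k i) (Pi ((Vs i^^k i) (A (Pr (B x)))))"
      using FA[OF i L, where a="k i" and x="Pr (B x)" and k=k] by (simp add: A_def Pi_def)
    finally show "oprod (map (\<lambda>i. (V i ^^ k i) \<circ> (\<lambda>x. x - V i (Vs i x)) \<circ> (Vs i ^^ k i)) (i # L)) x =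
         (oprod (map (\<lambda>i. V i ^^ k i) (i # L)) \<circ> oprod (map (\<lambda>i x. x - V i (Vs i x)) (i # L)) \<circ>
          oprod (map (\<lambda>i. Vs i ^^ k i) (rev (i # L)))) x"
      by (simp add: IH A_def[symmetric] B_def[symmetric] Pr_def[symmetric] Pi_def[symmetric])
  qed
qed

lemma main2: "distinct L \<Longrightarrow> set L \<subseteq> {1..n} \<Longrightarrow>
   oprod (map (\<lambda>i. (V i ^^ k i) \<circ> (Vs i ^^ k i)) L)
           = oprod (map (\<lambda>i. V i ^^ k i) L) \<circ> oprod (map (\<lambda>i. Vs i ^^ k i) (rev L))"
proof (induction L)
  case Nil then show ?case by simp
next
  case (Cons i L)
  have i: "i \<in> {1..n}" and L: "set L \<subseteq> {1..n}" "i \<notin> set L" and d: "distinct L" using Cons.prems by auto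
  define A where "A = oprod (map (\<lambda>i. V i ^^ k i) L)"
  define B where "B = oprod (map (\<lambda>i. Vs i ^^ k i) (rev L))"
  have IH: "oprod (map (\<lambda>i. (V i ^^ k i) \<circ> (Vs i ^^ k i)) L) = A \<circ> B"
    unfolding A_def B_def by (rule Cons.IH[OF d L(1)])
  show ?case
  proof (rule ext)
    fix x
    have "(V i^^k i) (A (id (B ((Vs i^^k i) x)))) = A ((V i^^k i) (id ((Vs i^^k i) (B x))))"
      using GL[OF i L good_id, where a="k i" and x=x and k=k] by (simp add: A_def B_def)
    also have "\<dots> = (V i^^k i) ((Vs i^^k i) (A (B x)))"
      using HA[OF i L, where a="k i" and k=k] by (simp add: A_def)
    finally show "oprod (map (\<lambda>i. (V i ^^ k i) \<circ> (Vs i ^^ k i)) (i # L)) x =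
       (oprod (map (\<lambda>i. V i ^^ k i) (i # L)) \<circ> oprod (map (\<lambda>i. Vs i ^^ k i) (rev (i # L)))) x"
      by (simp add: IH A_def[symmetric] B_def[symmetric])
  qed
qed

end

theorem lemma3p3:
  fixes J :: "'h::{real_inner,complete_space} \<Rightarrow> 'h"
    and n :: nat and z :: "nat \<Rightarrow> nat \<Rightarrow> complex"
    and V Vs :: "nat \<Rightarrow> 'h \<Rightarrow> 'h"
    and idx :: "nat list" and k :: "nat \<Rightarrow> nat"
  assumes "complex_structure J"
    and "doubly_noncommuting J n z V Vs"
    and "distinct idx" and "set idx \<subseteq> {1..n}"
  shows "oprod (map (\<lambda>i. (V i ^^ k i) \<circ> (\<lambda>x. x - V i (Vs i x)) \<circ> (Vs i ^^ k i)) idx)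
           = oprod (map (\<lambda>i. V i ^^ k i) idx) \<circ> oprod (map (\<lambda>i. (\<lambda>x. x - V i (Vs i x))) idx)
             \<circ> oprod (map (\<lambda>i. Vs i ^^ k i) (rev idx)) \<and>
         oprod (map (\<lambda>i. (V i ^^ k i) \<circ> (Vs i ^^ k i)) idx)
           = oprod (map (\<lambda>i. V i ^^ k i) idx) \<circ> oprod (map (\<lambda>i. Vs i ^^ k i) (rev idx))"
proof -
  interpret dnc J n z V Vs using assms(1,2) by unfold_locales
  show ?thesis using main1[OF assms(3,4)] main2[OF assms(3,4)] by simp
qed

end
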